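(* Let $\mathcal{C}$ be a (positive) monopole and let $(\mathcal{H},\mathcal{E},U)$ be a capacitor for $\mathcal{C}$. The following are equivalent: (1) the positive monopole $\mathcal{C}$ has enough injectives; (2) every object of $\mathcal{C}$ that is complete relative to $\mathcal{H}$ is injective in the positive monopole $\mathcal{C}$; (3) the injective objects of the positive monopole $\mathcal{C}$ are precisely the objects that are complete relative to $\mathcal{H}$.
   Context: A refinement of a category $\mathcal{C}$ is a subcategory containing all objects and all isomorphisms of $\mathcal{C}$. A (positive) monopole is a category $\mathcal{C}$ with a distinguished refinement $\mathcal{C}_+$ whose arrows are called positive. An object $x$ of a monopole is injective if for every positive arrow $g:a\to b$ and every arrow $f:a\to x$ there is an arrow $h:b\to x$ with $hg=f$; the monopole has enough injectives if every object $a$ admits a positive arrow $a\to x$ with $x$ injective. An object $z$ of a category is amphi-terminal if every object has at least one arrow to $z$ and $z$ has at most one arrow to any object. For a refinement $\mathcal{H}$ of $\mathcal{C}_+$ and an object $x$, let $x\downarrow_{\mathcal{H}}\mathcal{C}$ be the category whose objects are arrows $f:x\to a$ in $\mathcal{H}$, with morphisms from $f:x\to a$ to $g:x\to b$ the arrows $\xi:a\to b$ of $\mathcal{C}$ with $\xi f=g$. The object $x$ is complete relative to $\mathcal{H}$ if $1_x$ is an amphi-terminal object of $x\downarrow_{\mathcal{H}}\mathcal{C}$. For a category $\mathcal{E}$ and functor $U:\mathcal{E}\to\mathcal{C}$, let $x\downarrow_{\mathcal{H}}U$ have objects pairs $(b,f)$, $b\in\mathcal{E}$, $f:x\to Ub$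 in $\mathcal{H}$, and morphisms $(b,f)\to(c,g)$ the arrows $\varphi:b\to c$ of $\mathcal{E}$ with $U\varphi\circ f=g$. A capacitor for $\mathcal{C}$ is a triple $(\mathcal{H},\mathcal{E},U)$ with $\mathcal{H}$ a refinement of $\mathcal{C}_+$ and $U:\mathcal{E}\to\mathcal{C}$ faithful such that: (i) every object $x$ has a terminal object $(Jx,\eta_x:x\to UJx)$ of $x\downarrow_{\mathcal{H}}U$, and these give rise to a functor $J_+:\mathcal{C}_+^{\mathrm{op}}\to\mathcal{E}$ with $J_+x=Jx$ and $U(J_+f)\circ\eta_y\circ f=\eta_x$ for every $f:x\to y$ in $\mathcal{C}_+$; (ii) for every arrow $f:x\to y$ of $\mathcal{C}$ there is at most one arrow $\psi:Jx\to Jy$ of $\mathcal{E}$ with $U\psi\circ\eta_x=\eta_y\circ f$, and every arrow $h:UJx\to UJx$ with $h\circ\eta_x=\eta_x$ is the identity. *)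

theory Defs
  imports Main
begin

text \<open>A category is given by a set of objects, a set of arrows, domain and codomain
maps, identities and composition; Cmp g f denotes g \<circ> f.\<close>

record ('o, 'a) cat =
  Obj :: "'o set"
  Arr :: "'a set"
  Dm  :: "'a \<Rightarrow> 'o"
  Cd  :: "'a \<Rightarrow> 'o"
  Idn :: "'o \<Rightarrow> 'a"
  Cmp :: "'a \<Rightarrow> 'a \<Rightarrow> 'a"

definition category :: "('o, 'a) cat \<Rightarrow> bool" where
  "category C \<longleftrightarrow>
     (\<forall>f\<in>Arr C. Dm C f \<in> Obj C \<and> Cd C f \<in> Obj C) \<and>
     (\<forall>a\<in>Obj C. Idn C a \<in> Arr C \<and> Dm C (Idn C a) = a \<and> Cd C (Idn C a) = a) \<and>
     (\<forall>f\<in>Arr C. \<forall>g\<in>Arr C. Cd C f = Dm C g \<longrightarrow>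
        Cmp C g f \<in> Arr C \<and> Dm C (Cmp C g f) = Dm C f \<and> Cd C (Cmp C g f) = Cd C g) \<and>
     (\<forall>f\<in>Arr C. Cmp C f (Idn C (Dm C f)) = f \<and> Cmp C (Idn C (Cd C f)) f = f) \<and>
     (\<forall>f\<in>Arr C. \<forall>g\<in>Arr C. \<forall>h\<in>Arr C. Cd C f = Dm C g \<and> Cd C g = Dm C h \<longrightarrow>
        Cmp C h (Cmp C g f) = Cmp C (Cmp C h g) f)"

definition iso :: "('o, 'a) cat \<Rightarrow> 'a \<Rightarrow> bool" where
  "iso C f \<longleftrightarrow> f \<in> Arr C \<and> (\<exists>g\<in>Arr C. Dm C g = Cd C f \<and> Cd C g = Dm C f \<and>
     Cmp C g f = Idn C (Dm C f) \<and> Cmp C f g = Idn C (Cd C f))"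

definition op_cat :: "('o, 'a) cat \<Rightarrow> ('o, 'a) cat" where
  "op_cat C = \<lparr>Obj = Obj C, Arr = Arr C, Dm = Cd C, Cd = Dm C, Idn = Idn C,
              Cmp = (\<lambda>g f. Cmp C f g)\<rparr>"

definition wide_subcat :: "('o, 'a) cat \<Rightarrow> 'a set \<Rightarrow> bool" where
  "wide_subcat C S \<longleftrightarrow> S \<subseteq> Arr C \<and> (\<forall>a\<in>Obj C. Idn C a \<in> S) \<and>
     (\<forall>f\<in>S. \<forall>g\<in>S. Cd C f = Dm C g \<longrightarrow> Cmp C g f \<in> S)"

definition restrict_cat :: "('o, 'a) cat \<Rightarrow> 'a set \<Rightarrow> ('o, 'a) cat" where
  "restrict_cat C S = C\<lparr>Arr := S\<rparr>"

definition refinement :: "('o, 'a) cat \<Rightarrow> 'a set \<Rightarrow> bool" where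
  "refinement C S \<longleftrightarrow> wide_subcat C S \<and> (\<forall>f. iso C f \<longrightarrow> f \<in> S)"

text \<open>A (positive) monopole: a category C with distinguished refinement P of positive arrows.\<close>
definition monopole :: "('o, 'a) cat \<Rightarrow> 'a set \<Rightarrow> bool" where
  "monopole C P \<longleftrightarrow> category C \<and> refinement C P"

definition injective_obj :: "('o, 'a) cat \<Rightarrow> 'a set \<Rightarrow> 'o \<Rightarrow> bool" where
  "injective_obj C P x \<longleftrightarrow>
     (\<forall>g\<in>P. \<forall>f\<in>Arr C. Dm C f = Dm C g \<and> Cd C f = x \<longrightarrow>
        (\<exists>h\<in>Arr C. Dm C h = Cd C g \<and> Cd C h = x \<and> Cmp C h g = f))"

definition enough_injectives :: "('o, 'a) cat \<Rightarrow> 'a set \<Rightarrow> bool" where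
  "enough_injectives C P \<longleftrightarrow>
     (\<forall>a\<in>Obj C. \<exists>g\<in>P. Dm C g = a \<and> injective_obj C P (Cd C g))"

definition amphi_terminal :: "('o, 'a) cat \<Rightarrow> 'o \<Rightarrow> bool" where
  "amphi_terminal D z \<longleftrightarrow> z \<in> Obj D \<and>
     (\<forall>y\<in>Obj D. \<exists>u\<in>Arr D. Dm D u = y \<and> Cd D u = z) \<and>
     (\<forall>y\<in>Obj D. \<forall>u\<in>Arr D. \<forall>v\<in>Arr D.
        Dm D u = z \<and> Cd D u = y \<and> Dm D v = z \<and> Cd D v = y \<longrightarrow> u = v)"

definition terminal :: "('o, 'a) cat \<Rightarrow> 'o \<Rightarrow> bool" where
  "terminal D z \<longleftrightarrow> z \<in> Obj D \<and>
     (\<forall>y\<in>Obj D. \<exists>!u. u \<in> Arr D \<and> Dm D u = y \<and> Cd D u = z)"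

text \<open>The category x \<down>_H C: objects are arrows f : x \<rightarrow> a in H; a morphism
f \<rightarrow> g is an arrow \<xi> of C with \<xi> f = g, represented as the triple (f, \<xi>, g).\<close>
definition under_cat :: "('o, 'a) cat \<Rightarrow> 'a set \<Rightarrow> 'o \<Rightarrow> ('a, 'a \<times> 'a \<times> 'a) cat" where
  "under_cat C H x =
     \<lparr>Obj = {f\<in>H. Dm C f = x},
      Arr = {(f, \<xi>, g). f \<in> H \<and> Dm C f = x \<and> g \<in> H \<and> Dm C g = x \<and> \<xi> \<in> Arr C \<and>
                       Dm C \<xi> = Cd C f \<and> Cd C \<xi> = Cd C g \<and> Cmp C \<xi> f = g},
      Dm = (\<lambda>(f, \<xi>, g). f),
      Cd = (\<lambda>(f, \<xi>, g). g),
      Idn = (\<lambda>f. (f, Idn C (Cd C f), f)),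
      Cmp = (\<lambda>(g, \<eta>, h) (f, \<xi>, g'). (f, Cmp C \<eta> \<xi>, h))\<rparr>"

definition complete_rel :: "('o, 'a) cat \<Rightarrow> 'a set \<Rightarrow> 'o \<Rightarrow> bool" where
  "complete_rel C H x \<longleftrightarrow> amphi_terminal (under_cat C H x) (Idn C x)"

definition is_functor :: "('o, 'a) cat \<Rightarrow> ('p, 'b) cat \<Rightarrow> ('o \<Rightarrow> 'p) \<Rightarrow> ('a \<Rightarrow> 'b) \<Rightarrow> bool" where
  "is_functor C D Fo Fa \<longleftrightarrow>
     (\<forall>a\<in>Obj C. Fo a \<in> Obj D \<and> Fa (Idn C a) = Idn D (Fo a)) \<and>
     (\<forall>f\<in>Arr C. Fa f \<in> Arr D \<and> Dm D (Fa f) = Fo (Dm C f) \<and> Cd D (Fa f) = Fo (Cd C f)) \<and>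
     (\<forall>f\<in>Arr C. \<forall>g\<in>Arr C. Cd C f = Dm C g \<longrightarrow> Fa (Cmp C g f) = Cmp D (Fa g) (Fa f))"

definition faithful :: "('o, 'a) cat \<Rightarrow> ('a \<Rightarrow> 'b) \<Rightarrow> bool" where
  "faithful C Fa \<longleftrightarrow>
     (\<forall>f\<in>Arr C. \<forall>g\<in>Arr C. Dm C f = Dm C g \<and> Cd C f = Cd C g \<and> Fa f = Fa g \<longrightarrow> f = g)"

text \<open>The category x \<down>_H U: objects are pairs (b, f) with b an object of E and
f : x \<rightarrow> U b in H; a morphism (b,f) \<rightarrow> (c,g) is an arrow \<phi> : b \<rightarrow> c of E with
U \<phi> \<circ> f = g, represented as the triple ((b,f), \<phi>, (c,g)).\<close>
definition under_functor ::
  "('o, 'a) cat \<Rightarrow> 'a set \<Rightarrow> ('p, 'b) cat \<Rightarrow> ('p \<Rightarrow> 'o) \<Rightarrow> ('b \<Rightarrow> 'a) \<Rightarrow> 'o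
     \<Rightarrow> ('p \<times> 'a, ('p \<times> 'a) \<times> 'b \<times> ('p \<times> 'a)) cat" where
  "under_functor C H E Uo Ua x =
     \<lparr>Obj = {(b, f). b \<in> Obj E \<and> f \<in> H \<and> Dm C f = x \<and> Cd C f = Uo b},
      Arr = {((b, f), \<phi>, (c, g)). b \<in> Obj E \<and> f \<in> H \<and> Dm C f = x \<and> Cd C f = Uo b \<and>
                c \<in> Obj E \<and> g \<in> H \<and> Dm C g = x \<and> Cd C g = Uo c \<and>
                \<phi> \<in> Arr E \<and> Dm E \<phi> = b \<and> Cd E \<phi> = c \<and> Cmp C (Ua \<phi>) f = g},
      Dm = (\<lambda>(s, \<phi>, t). s),
      Cd = (\<lambda>(s, \<phi>, t). t),
      Idn = (\<lambda>(b, f). ((b, f), Idn E b, (b, f))),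
      Cmp = (\<lambda>(t, \<psi>, u) (s, \<phi>, t'). (s, Cmp E \<psi> \<phi>, u))\<rparr>"

definition capacitor ::
  "('o, 'a) cat \<Rightarrow> 'a set \<Rightarrow> 'a set \<Rightarrow> ('p, 'b) cat \<Rightarrow> ('p \<Rightarrow> 'o) \<Rightarrow> ('b \<Rightarrow> 'a) \<Rightarrow> bool" where
  "capacitor C P H E Uo Ua \<longleftrightarrow>
     refinement (restrict_cat C P) H \<and> category E \<and> is_functor E C Uo Ua \<and> faithful E Ua \<and>
     (\<exists>(J :: 'o \<Rightarrow> 'p) (\<eta> :: 'o \<Rightarrow> 'a) (Jp :: 'a \<Rightarrow> 'b).
        \<comment> \<open>(i)\<close>
        (\<forall>x\<in>Obj C. terminal (under_functor C H E Uo Ua x) (J x, \<eta> x)) \<and>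
        is_functor (op_cat (restrict_cat C P)) E J Jp \<and>
        (\<forall>f\<in>P. Cmp C (Cmp C (Ua (Jp f)) (\<eta> (Cd C f))) f = \<eta> (Dm C f)) \<and>
        \<comment> \<open>(ii)\<close>
        (\<forall>f\<in>Arr C. \<forall>\<psi>1\<in>Arr E. \<forall>\<psi>2\<in>Arr E.
           Dm E \<psi>1 = J (Dm C f) \<and> Cd E \<psi>1 = J (Cd C f) \<and>
           Cmp C (Ua \<psi>1) (\<eta> (Dm C f)) = Cmp C (\<eta> (Cd C f)) f \<and>
           Dm E \<psi>2 = J (Dm C f) \<and> Cd E \<psi>2 = J (Cd C f) \<and>
           Cmp C (Ua \<psi>2) (\<eta> (Dm C f)) = Cmp C (\<eta> (Cd C f)) f \<longrightarrow> \<psi>1 = \<psi>2) \<and>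
        (\<forall>x\<in>Obj C. \<forall>h\<in>Arr C. Dm C h = Uo (J x) \<and> Cd C h = Uo (J x) \<and>
           Cmp C h (\<eta> x) = \<eta> x \<longrightarrow> h = Idn C (Uo (J x))))"

end

theory Submission
  imports Defs
begin

lemma cat_dc: "category C \<Longrightarrow> f \<in> Arr C \<Longrightarrow> Dm C f \<in> Obj C \<and> Cd C f \<in> Obj C"
  unfolding category_def by blast
lemma cat_id: "category C \<Longrightarrow> a \<in> Obj C \<Longrightarrow> Idn C a \<in> Arr C \<and> Dm C (Idn C a) = a \<and> Cd C (Idn C a) = a"
  unfolding category_def by blast
lemma cat_comp: "category C \<Longrightarrow> f \<in> Arr C \<Longrightarrow> g \<in> Arr C \<Longrightarrow> Cd C f = Dm C g \<Longrightarrow>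
   Cmp C g f \<in> Arr C \<and> Dm C (Cmp C g f) = Dm C f \<and> Cd C (Cmp C g f) = Cd C g"
  unfolding category_def by blast
lemma cat_idl: "category C \<Longrightarrow> f \<in> Arr C \<Longrightarrow> Cmp C f (Idn C (Dm C f)) = f"
  unfolding category_def by blast
lemma cat_idr: "category C \<Longrightarrow> f \<in> Arr C \<Longrightarrow> Cmp C (Idn C (Cd C f)) f = f"
  unfolding category_def by blast
lemma cat_assoc: "category C \<Longrightarrow> f \<in> Arr C \<Longrightarrow> g \<in> Arr C \<Longrightarrow> h \<in> Arr C \<Longrightarrow>
   Cd C f = Dm C g \<Longrightarrow> Cd C g = Dm C h \<Longrightarrow> Cmp C h (Cmp C g f) = Cmp C (Cmp C h g) f"
  unfolding category_def by blast

lemma complete_D: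
  assumes "complete_rel C H x" "f \<in> H" "Dm C f = x" "category C" "x \<in> Obj C"
  shows "\<exists>\<xi>\<in>Arr C. Dm C \<xi> = Cd C f \<and> Cd C \<xi> = x \<and> Cmp C \<xi> f = Idn C x"
proof -
  have "f \<in> Obj (under_cat C H x)" using assms by (simp add: under_cat_def)
  then obtain u where "u \<in> Arr (under_cat C H x)" "Dm (under_cat C H x) u = f"
    "Cd (under_cat C H x) u = Idn C x"
    using assms(1) unfolding complete_rel_def amphi_terminal_def by blast
  then show ?thesis using cat_id[OF assms(4,5)] by (auto simp: under_cat_def)
qed

lemma complete_I:
  assumes "category C" "x \<in> Obj C" "Idn C x \<in> H"
    and "\<And>f. f \<in> H \<Longrightarrow> Dm C f = x \<Longrightarrow> \<exists>\<xi>\<in>Arr C. Dm C \<xi> = Cd C f \<and> Cd C \<xi> = x \<and> Cmp C \<xi> f = Idn C x"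
  shows "complete_rel C H x"
  unfolding complete_rel_def amphi_terminal_def
proof (intro conjI ballI impI)
  show "Idn C x \<in> Obj (under_cat C H x)" using assms cat_id[OF assms(1,2)] by (simp add: under_cat_def)
next
  fix y assume y: "y \<in> Obj (under_cat C H x)"
  then have "y \<in> H" "Dm C y = x" by (auto simp: under_cat_def)
  then obtain \<xi> where "\<xi>\<in>Arr C" "Dm C \<xi> = Cd C y" "Cd C \<xi> = x" "Cmp C \<xi> y = Idn C x"
    using assms(4) by blast
  then show "\<exists>u\<in>Arr (under_cat C H x). Dm (under_cat C H x) u = y \<and> Cd (under_cat C H x) u = Idn C x"
    using \<open>y \<in> H\<close> \<open>Dm C y = x\<close> assms cat_id[OF assms(1,2)]
    by (intro bexI[of _ "(y, \<xi>, Idn C x)"]) (auto simp: under_cat_def)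
next
  fix y u v
  assume "y \<in> Obj (under_cat C H x)" "u \<in> Arr (under_cat C H x)" "v \<in> Arr (under_cat C H x)"
    "Dm (under_cat C H x) u = Idn C x \<and> Cd (under_cat C H x) u = y \<and>
     Dm (under_cat C H x) v = Idn C x \<and> Cd (under_cat C H x) v = y"
  then show "u = v"
    using cat_id[OF assms(1,2)] cat_idl[OF assms(1)]
    by (auto simp: under_cat_def) metis+
qed

lemma retract_injective:
  assumes "category C" "injective_obj C P y" "P \<subseteq> Arr C"
    "i \<in> Arr C" "r \<in> Arr C" "Dm C i = x" "Cd C i = y" "Dm C r = y" "Cd C r = x"
    "Cmp C r i = Idn C x"
  shows "injective_obj C P x"
  unfolding injective_obj_def
proof (intro ballI impI)
  fix g f assume g: "g \<in> P" and f: "f \<in> Arr C" and fd: "Dm C f = Dm C g \<and> Cd C f = x"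
  have if1: "Cmp C i f \<in> Arr C \<and> Dm C (Cmp C i f) = Dm C f \<and> Cd C (Cmp C i f) = y"
    using cat_comp[OF assms(1) f assms(4)] fd assms by auto
  then obtain h where h: "h \<in> Arr C" "Dm C h = Cd C g" "Cd C h = y" "Cmp C h g = Cmp C i f"
    using assms(2) g fd unfolding injective_obj_def by metis
  have g': "g \<in> Arr C" using g assms by blast
  have rh: "Cmp C r h \<in> Arr C \<and> Dm C (Cmp C r h) = Cd C g \<and> Cd C (Cmp C r h) = x"
    using cat_comp[OF assms(1) h(1) assms(5)] h assms by auto
  have "Cmp C (Cmp C r h) g = Cmp C r (Cmp C h g)"
    using cat_assoc[OF assms(1) g' h(1) assms(5)] h assms by auto
  also have "\<dots> = Cmp C r (Cmp C i f)" using h by simp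
  also have "\<dots> = Cmp C (Cmp C r i) f"
    using cat_assoc[OF assms(1) f assms(4) assms(5)] fd assms by auto
  also have "\<dots> = f" using assms(10) fd cat_idr[OF assms(1) f] by simp
  finally show "\<exists>h\<in>Arr C. Dm C h = Cd C g \<and> Cd C h = x \<and> Cmp C h g = f"
    using rh by blast
qed


theorem mainTheorem2:
  fixes C :: "('o, 'a) cat" and P H :: "'a set"
    and E :: "('p, 'b) cat" and Uo :: "'p \<Rightarrow> 'o" and Ua :: "'b \<Rightarrow> 'a"
  assumes "monopole C P"
    and "capacitor C P H E Uo Ua"
  shows "(enough_injectives C P \<longleftrightarrow>
            (\<forall>x\<in>Obj C. complete_rel C H x \<longrightarrow> injective_obj C P x))
       \<and> ((\<forall>x\<in>Obj C. complete_rel C H x \<longrightarrow> injective_obj C P x) \<longleftrightarrow>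
            (\<forall>x\<in>Obj C. injective_obj C P x \<longleftrightarrow> complete_rel C H x))"
proof -
  have cC: "category C" using assms(1) by (simp add: monopole_def)
  have PA: "P \<subseteq> Arr C" and PI: "\<And>a. a \<in> Obj C \<Longrightarrow> Idn C a \<in> P"
    using assms(1) by (auto simp: monopole_def refinement_def wide_subcat_def)
  have HP: "H \<subseteq> P" and HI: "\<And>a. a \<in> Obj C \<Longrightarrow> Idn C a \<in> H"
    and HC: "\<And>f g. f \<in> H \<Longrightarrow> g \<in> H \<Longrightarrow> Cd C f = Dm C g \<Longrightarrow> Cmp C g f \<in> H"
    using assms(2) by (auto simp: capacitor_def refinement_def wide_subcat_def restrict_cat_def)
  have Ufun: "is_functor E C Uo Ua" using assms(2) by (simp add: capacitor_def)
  have UA: "\<And>\<phi>. \<phi> \<in> Arr E \<Longrightarrow> Ua \<phi> \<in> Arr C \<and> Dm C (Ua \<phi>) = Uo (Dm E \<phi>) \<and> Cd C (Ua \<phi>) = Uo (Cd E \<phi>)"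
    and UO: "\<And>c. c \<in> Obj E \<Longrightarrow> Uo c \<in> Obj C"
    using Ufun unfolding is_functor_def by auto
  obtain J :: "'o \<Rightarrow> 'p" and \<eta> :: "'o \<Rightarrow> 'a" and Jp :: "'a \<Rightarrow> 'b" where
    T: "\<forall>x\<in>Obj C. terminal (under_functor C H E Uo Ua x) (J x, \<eta> x)" and
    JF: "is_functor (op_cat (restrict_cat C P)) E J Jp" and
    NT: "\<forall>f\<in>P. Cmp C (Cmp C (Ua (Jp f)) (\<eta> (Cd C f))) f = \<eta> (Dm C f)" and
    ID: "\<forall>x\<in>Obj C. \<forall>h\<in>Arr C. Dm C h = Uo (J x) \<and> Cd C h = Uo (J x) \<and>
           Cmp C h (\<eta> x) = \<eta> x \<longrightarrow> h = Idn C (Uo (J x))"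
    using assms(2) unfolding capacitor_def by (elim conjE exE) (rule that; assumption)
  have ETA: "J x \<in> Obj E \<and> \<eta> x \<in> H \<and> Dm C (\<eta> x) = x \<and> Cd C (\<eta> x) = Uo (J x)"
    if "x \<in> Obj C" for x
  proof -
    have "terminal (under_functor C H E Uo Ua x) (J x, \<eta> x)" using T that by blast
    then have "(J x, \<eta> x) \<in> Obj (under_functor C H E Uo Ua x)"
      unfolding terminal_def by (rule conjunct1)
    then show ?thesis by (simp add: under_functor_def)
  qed
  have TERM: "\<exists>\<phi>\<in>Arr E. Dm E \<phi> = c \<and> Cd E \<phi> = J x \<and> Cmp C (Ua \<phi>) g = \<eta> x"
    if "x \<in> Obj C" "c \<in> Obj E" "g \<in> H" "Dm C g = x" "Cd C g = Uo c" for x c g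
  proof -
    have "(c, g) \<in> Obj (under_functor C H E Uo Ua x)" using that by (simp add: under_functor_def)
    moreover have "terminal (under_functor C H E Uo Ua x) (J x, \<eta> x)" using T that by blast
    ultimately have "\<exists>!u. u \<in> Arr (under_functor C H E Uo Ua x) \<and>
      Dm (under_functor C H E Uo Ua x) u = (c, g) \<and> Cd (under_functor C H E Uo Ua x) u = (J x, \<eta> x)"
      unfolding terminal_def by blast
    then obtain u where "u \<in> Arr (under_functor C H E Uo Ua x)"
      "Dm (under_functor C H E Uo Ua x) u = (c, g)" "Cd (under_functor C H E Uo Ua x) u = (J x, \<eta> x)"
      by (meson ex1_implies_ex)
    then show ?thesis by (auto simp: under_functor_def)
  qed
  have JP: "Jp f \<in> Arr E \<and> Dm E (Jp f) = J (Cd C f) \<and> Cd E (Jp f) = J (Dm C f)" if "f \<in> P" for f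
    using JF that unfolding is_functor_def by (auto simp: op_cat_def restrict_cat_def)
  have A: "complete_rel C H x" if x: "x \<in> Obj C" and inj: "injective_obj C P x" for x
  proof (rule complete_I[OF cC x HI[OF x]])
    fix f assume "f \<in> H" "Dm C f = x"
    then show "\<exists>\<xi>\<in>Arr C. Dm C \<xi> = Cd C f \<and> Cd C \<xi> = x \<and> Cmp C \<xi> f = Idn C x"
      using inj cat_id[OF cC x] HP unfolding injective_obj_def by blast
  qed
  have B: "enough_injectives C P" if H2: "\<forall>x\<in>Obj C. complete_rel C H x \<longrightarrow> injective_obj C P x"
    unfolding enough_injectives_def
  proof
    fix a assume a: "a \<in> Obj C"
    note Ea = ETA[OF a]
    define y where "y = Uo (J a)"
    have y: "y \<in> Obj C" using UO Ea y_def by blast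
    have "complete_rel C H y"
    proof (rule complete_I[OF cC y HI[OF y]])
      fix f assume f: "f \<in> H" "Dm C f = y"
      have fA: "f \<in> Arr C" using f HP PA by blast
      define b where "b = Cd C f"
      have b: "b \<in> Obj C" using cat_dc[OF cC fA] b_def by simp
      note Eb = ETA[OF b]
      have eA: "\<eta> a \<in> Arr C" "\<eta> b \<in> Arr C" using Ea Eb HP PA by blast+
      define g0 where "g0 = Cmp C (\<eta> b) (Cmp C f (\<eta> a))"
      have g0: "g0 \<in> H" "Dm C g0 = a" "Cd C g0 = Uo (J b)"
        using HC[OF HC[OF Ea[THEN conjunct2, THEN conjunct1] f(1)] Eb[THEN conjunct2, THEN conjunct1]]
          cat_comp[OF cC eA(1) fA] cat_comp[OF cC _ eA(2)] f Ea Eb y_def b_def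
        unfolding g0_def by auto
      obtain \<phi> where \<phi>: "\<phi> \<in> Arr E" "Dm E \<phi> = J b" "Cd E \<phi> = J a" "Cmp C (Ua \<phi>) g0 = \<eta> a"
        using TERM[OF a _ g0] Eb by blast
      note U\<phi> = UA[OF \<phi>(1)]
      define \<xi> where "\<xi> = Cmp C (Ua \<phi>) (\<eta> b)"
      have \<xi>: "\<xi> \<in> Arr C" "Dm C \<xi> = b" "Cd C \<xi> = y"
        using cat_comp[OF cC eA(2) U\<phi>[THEN conjunct1]] U\<phi> \<phi> Eb y_def unfolding \<xi>_def by auto
      have h: "Cmp C \<xi> f \<in> Arr C" "Dm C (Cmp C \<xi> f) = y" "Cd C (Cmp C \<xi> f) = y"
        using cat_comp[OF cC fA \<xi>(1)] \<xi> f b_def by auto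
      have fe: "Cmp C f (\<eta> a) \<in> Arr C" "Dm C (Cmp C f (\<eta> a)) = a" "Cd C (Cmp C f (\<eta> a)) = b"
        using cat_comp[OF cC eA(1) fA] Ea f y_def b_def by auto
      have "Cmp C (Cmp C \<xi> f) (\<eta> a) = Cmp C \<xi> (Cmp C f (\<eta> a))"
        using cat_assoc[OF cC eA(1) fA \<xi>(1)] Ea f y_def \<xi> b_def by auto
      also have "\<dots> = Cmp C (Ua \<phi>) (Cmp C (\<eta> b) (Cmp C f (\<eta> a)))"
        unfolding \<xi>_def using cat_assoc[OF cC fe(1) eA(2) U\<phi>[THEN conjunct1]] fe Eb U\<phi> \<phi> by auto
      also have "\<dots> = \<eta> a" using \<phi>(4) g0_def by simp
      finally have "Cmp C (Cmp C \<xi> f) (\<eta> a) = \<eta> a" .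
      then have "Cmp C \<xi> f = Idn C y" using ID[rule_format, OF a h(1)] h y_def by simp
      then show "\<exists>\<xi>\<in>Arr C. Dm C \<xi> = Cd C f \<and> Cd C \<xi> = y \<and> Cmp C \<xi> f = Idn C y"
        using \<xi> b_def by blast
    qed
    then have "injective_obj C P y" using H2 y by blast
    then show "\<exists>g\<in>P. Dm C g = a \<and> injective_obj C P (Cd C g)"
      using Ea HP y_def by (intro bexI[of _ "\<eta> a"]) auto
  qed
  have Cc: "injective_obj C P x" if EI: "enough_injectives C P" and x: "x \<in> Obj C"
    and cx: "complete_rel C H x" for x
  proof -
    obtain g where g: "g \<in> P" "Dm C g = x" "injective_obj C P (Cd C g)"
      using EI x unfolding enough_injectives_def by blast
    define z where "z = Cd C g"
    have gA: "g \<in> Arr C" using g PA by blast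
    have z: "z \<in> Obj C" using cat_dc[OF cC gA] z_def by simp
    note Ex = ETA[OF x] and Ez = ETA[OF z]
    have eA: "\<eta> x \<in> Arr C" "\<eta> z \<in> Arr C" "\<eta> x \<in> P" using Ex Ez HP PA by blast+
    define y where "y = Uo (J x)"
    obtain k where k: "k \<in> Arr C" "Dm C k = y" "Cd C k = z" "Cmp C k (\<eta> x) = g"
      using g(3) eA(3) gA g Ex unfolding injective_obj_def z_def y_def by metis
    note JPg = JP[OF g(1)] 
    note UJ = UA[OF JPg[THEN conjunct1]]
    define r where "r = Cmp C (Ua (Jp g)) (\<eta> z)"
    have r: "r \<in> Arr C" "Dm C r = z" "Cd C r = y"
      using cat_comp[OF cC eA(2) UJ[THEN conjunct1]] UJ JPg Ez g z_def y_def unfolding r_def by auto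
    have rk: "Cmp C r k \<in> Arr C" "Dm C (Cmp C r k) = y" "Cd C (Cmp C r k) = y"
      using cat_comp[OF cC k(1) r(1)] k r by auto
    have "Cmp C (Cmp C r k) (\<eta> x) = Cmp C r (Cmp C k (\<eta> x))"
      using cat_assoc[OF cC eA(1) k(1) r(1)] Ex k r y_def by auto
    also have "\<dots> = \<eta> x" using k(4) NT g r_def z_def by auto
    finally have "Cmp C r k = Idn C y" using ID[rule_format, OF x rk(1)] rk y_def by simp
    then have iy: "injective_obj C P y"
      using retract_injective[OF cC _ PA k(1) r(1) k(2,3) r(2,3)] g(3) z_def by blast
    obtain \<xi> where \<xi>: "\<xi>\<in>Arr C" "Dm C \<xi> = y" "Cd C \<xi> = x" "Cmp C \<xi> (\<eta> x) = Idn C x"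
      using complete_D[OF cx _ _ cC x] Ex y_def by metis
    show ?thesis
      using retract_injective[OF cC iy PA eA(1) \<xi>(1) _ _ \<xi>(2,3,4)] Ex y_def by blast
  qed
  have D1: "enough_injectives C P \<longleftrightarrow> (\<forall>x\<in>Obj C. complete_rel C H x \<longrightarrow> injective_obj C P x)"
  proof
    assume "enough_injectives C P" then show "\<forall>x\<in>Obj C. complete_rel C H x \<longrightarrow> injective_obj C P x"
      using Cc by blast
  next
    assume "\<forall>x\<in>Obj C. complete_rel C H x \<longrightarrow> injective_obj C P x" then show "enough_injectives C P"
      by (rule B)
  qed
  have D2: "(\<forall>x\<in>Obj C. complete_rel C H x \<longrightarrow> injective_obj C P x) \<longleftrightarrow>
            (\<forall>x\<in>Obj C. injective_obj C P x \<longleftrightarrow> complete_rel C H x)"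
    using A by blast
  show ?thesis using D1 D2 by (rule conjI)
qed

end
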